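(* For all integers $m\ge1$ and $v\ge1$, the untwisted Dowker sum satisfies $$S_{m,v,1}:=\sum_{k=1}^{m-1}\csc^{2v}\!\left(\frac{k\pi}{m}\right)=2^{2v+1}\sum_{n=0}^{v-1}\left(\frac{m}{2\pi}\right)^{2v-2n}\frac{\Gamma(2v-2n)}{\Gamma(2v)}\,s(v,n)\left(1-\frac{1}{m^{2v-2n}}\right)\zeta(2v-2n).$$ In particular $S_{m,v,1}$ is a polynomial in $m^2$ of degree $v$ divisible by $m^2-1$.
   Context: For integers $v\ge1$ and $0\le n\le v-1$, $s(v,n)$ denotes the $n$-th elementary symmetric polynomial evaluated at $1^2,2^2,\dots,(v-1)^2$, with $s(v,0)=1$. $\zeta$ is the Riemann zeta function. Empty sums equal $0$. *)

theory Defs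
  imports "HOL-Analysis.Analysis" "HOL-Computational_Algebra.Polynomial"
begin

definition esym_sq :: "nat \<Rightarrow> nat \<Rightarrow> real" where
  "esym_sq r n = (\<Sum>A\<in>{A. A \<subseteq> {1..<r} \<and> card A = n}. \<Prod>j\<in>A. (real j)^2)"

definition zeta_real :: "real \<Rightarrow> real" where
  "zeta_real s = (\<Sum>k. 1 / (real (Suc k)) powr s)"

definition dowker_sum :: "nat \<Rightarrow> nat \<Rightarrow> real" where
  "dowker_sum m r = (\<Sum>k\<in>{1..m-1}. inverse (sin (of_nat k * pi / of_nat m)) ^ (2*r))"

end

theory Submission
  imports Defs
begin


definition Q :: "nat \<Rightarrow> real \<Rightarrow> real" where
  "Q n t = Polygamma n t + (-1)^(Suc n) * Polygamma n (1 - t)"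

definition U :: "real set" where "U = {t. sin (t * pi) \<noteq> 0}"

lemma open_U: "open U"
  unfolding U_def by (intro open_Collect_neq continuous_intros)

lemma U_iff: "t \<in> U \<longleftrightarrow> t \<notin> \<int>"
  unfolding U_def by (simp add: sin_times_pi_eq_0)

lemma U_nonpos: assumes "t \<in> U" shows "t \<notin> \<int>\<^sub>\<le>\<^sub>0" "1 - t \<notin> \<int>\<^sub>\<le>\<^sub>0"
proof -
  have t: "t \<notin> \<int>" using assms U_iff by auto
  then show "t \<notin> \<int>\<^sub>\<le>\<^sub>0" using nonpos_Ints_subset_Ints by blast
  have "1 - t \<notin> \<int>"
  proof
    assume "1 - t \<in> \<int>"
    then have "1 - (1 - t) \<in> \<int>" by (rule Ints_diff[OF Ints_1])
    then show False using t by simp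
  qed
  then show "1 - t \<notin> \<int>\<^sub>\<le>\<^sub>0" using nonpos_Ints_subset_Ints by blast
qed

lemma Q_deriv: assumes "t \<in> U" shows "(Q n has_real_derivative Q (Suc n) t) (at t)"
proof -
  note nz = U_nonpos[OF assms]
  have d1: "(Polygamma n has_real_derivative Polygamma (Suc n) t) (at t)"
    by (rule has_field_derivative_Polygamma[OF nz(1)])
  have d0: "((\<lambda>t. 1 - t) has_real_derivative (-1)) (at t)"
    by (auto intro!: derivative_eq_intros)
  have d2: "((\<lambda>t. Polygamma n (1 - t)) has_real_derivative Polygamma (Suc n) (1 - t) * (-1)) (at t)"
    by (rule DERIV_chain2[OF has_field_derivative_Polygamma[OF nz(2)] d0])
  have "((\<lambda>t. Polygamma n t + (-1)^(Suc n) * Polygamma n (1 - t)) has_real_derivative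
      Polygamma (Suc n) t + (-1)^(Suc n) * (Polygamma (Suc n) (1 - t) * (-1))) (at t)"
    by (intro DERIV_add DERIV_cmult d1 d2)
  then show ?thesis unfolding Q_def[abs_def] by simp
qed

lemma Gamma_reflection_real: assumes "t \<in> U"
  shows "Gamma t * Gamma (1 - t) = pi / sin (pi * t)"
proof -
  have "Gamma (complex_of_real t) * Gamma (1 - complex_of_real t) = of_real pi / sin (of_real pi * of_real t)"
    by (rule Gamma_reflection_complex)
  also have "1 - complex_of_real t = of_real (1 - t)" by simp
  also have "sin (of_real pi * of_real t) = complex_of_real (sin (pi * t))"
    by (simp only: of_real_mult[symmetric] sin_of_real)
  finally have "complex_of_real (Gamma t * Gamma (1 - t)) = complex_of_real (pi / sin (pi * t))"
    by (simp only: Gamma_complex_of_real of_real_mult of_real_divide)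
  then show ?thesis using of_real_eq_iff by blast
qed

lemma deriv_eq_on_open:
  fixes f g :: "real \<Rightarrow> real"
  assumes "open S" "x \<in> S" "\<And>y. y \<in> S \<Longrightarrow> f y = g y"
    "(f has_real_derivative a) (at x)" "(g has_real_derivative b) (at x)"
  shows "a = b"
proof -
  have "(g has_real_derivative a) (at x)"
    by (rule has_field_derivative_transform_within_open[OF assms(4,1,2)]) (use assms(3) in auto)
  then show ?thesis using assms(5) DERIV_unique by blast
qed

lemma Q0: assumes "t \<in> U" shows "Q 0 t = - pi * cot (pi * t)"
proof -
  note nz = U_nonpos[OF assms]
  have s: "sin (pi * t) \<noteq> 0" using assms by (simp add: U_def mult.commute)
  have d1: "((\<lambda>t. Gamma t * Gamma (1 - t)) has_real_derivative
       Gamma t * Digamma t * Gamma (1 - t) + Gamma t * (Gamma (1 - t) * Digamma (1 - t) * (-1))) (at t)"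
  proof -
    have d0: "((\<lambda>t. 1 - t) has_real_derivative (-1)) (at t)"
      by (auto intro!: derivative_eq_intros)
    have g1: "(Gamma has_real_derivative Gamma t * Digamma t) (at t)"
      by (rule has_field_derivative_Gamma[OF nz(1)])
    have g2: "((\<lambda>t. Gamma (1 - t)) has_real_derivative Gamma (1 - t) * Digamma (1 - t) * (-1)) (at t)"
      by (rule DERIV_chain2[OF has_field_derivative_Gamma[OF nz(2)] d0])
    show ?thesis by (rule DERIV_cong[OF DERIV_mult[OF g1 g2]]) (simp add: algebra_simps)
  qed
  have d2: "((\<lambda>t. pi / sin (pi * t)) has_real_derivative
       - (pi * (cos (pi * t) * pi)) / (sin (pi * t))^2) (at t)"
    using s by (auto intro!: derivative_eq_intros simp: power2_eq_square)
  have eq: "Gamma t * Digamma t * Gamma (1 - t) + Gamma t * (Gamma (1 - t) * Digamma (1 - t) * (-1))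
       = - (pi * (cos (pi * t) * pi)) / (sin (pi * t))^2"
    by (rule deriv_eq_on_open[OF open_U assms _ d1 d2]) (simp add: Gamma_reflection_real)
  have "Gamma t * Gamma (1 - t) * (Digamma t - Digamma (1 - t)) = - (pi * (cos (pi * t) * pi)) / (sin (pi * t))^2"
    using eq by (simp add: algebra_simps)
  then have "pi / sin (pi * t) * (Digamma t - Digamma (1 - t)) = - (pi * (cos (pi * t) * pi)) / (sin (pi * t))^2"
    by (simp only: Gamma_reflection_real[OF assms])
  then have "Digamma t - Digamma (1 - t) = - pi * (cos (pi * t) / sin (pi * t))"
  proof -
    assume h: "pi / sin (pi * t) * (Digamma t - Digamma (1 - t)) = - (pi * (cos (pi * t) * pi)) / (sin (pi * t))^2"
    have "pi * ((Digamma t - Digamma (1 - t)) * sin (pi * t)) = pi * (- (pi * cos (pi * t)))"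
      using h s by (auto simp add: divide_simps power2_eq_square)
    then have "(Digamma t - Digamma (1 - t)) * sin (pi * t) = - (pi * cos (pi * t))"
      using pi_neq_zero mult_left_cancel by blast
    then show ?thesis using s by (simp add: divide_simps)
  qed
  then show ?thesis by (simp add: Q_def cot_def)
qed

lemma Q1: assumes "t \<in> U" shows "Q (Suc 0) t = pi^2 / sin (pi * t) ^ 2"
proof -
  have s: "\<And>y. y \<in> U \<Longrightarrow> sin (pi * y) \<noteq> 0" by (simp add: U_def mult.commute)
  have d2: "((\<lambda>t. - pi * cot (pi * t)) has_real_derivative
       - pi * (- inverse ((sin (pi * t))\<^sup>2) * pi)) (at t)"
  proof -
    have d0: "((\<lambda>t. pi * t) has_real_derivative pi) (at t)"
      by (auto intro!: derivative_eq_intros)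
    show ?thesis
      by (intro DERIV_cmult DERIV_chain2[OF DERIV_cot[OF s[OF assms]] d0])
  qed
  have "Q (Suc 0) t = - pi * (- inverse ((sin (pi * t))\<^sup>2) * pi)"
    by (rule deriv_eq_on_open[OF open_U assms _ Q_deriv[OF assms, of 0] d2]) (simp add: Q0)
  then show ?thesis by (simp add: field_simps power2_eq_square)
qed




lemma esym_insert:
  fixes f :: "nat \<Rightarrow> real"
  assumes "finite S" "a \<notin> S"
  shows "(\<Sum>A\<in>{A. A \<subseteq> insert a S \<and> card A = Suc n}. \<Prod>j\<in>A. f j) =
         (\<Sum>A\<in>{A. A \<subseteq> S \<and> card A = Suc n}. \<Prod>j\<in>A. f j) +
         f a * (\<Sum>A\<in>{A. A \<subseteq> S \<and> card A = n}. \<Prod>j\<in>A. f j)"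
proof -
  define X where "X = {A. A \<subseteq> S \<and> card A = Suc n}"
  define Y where "Y = {A. A \<subseteq> S \<and> card A = n}"
  have fin: "finite {A. A \<subseteq> T}" if "finite T" for T :: "nat set" using that by simp
  have eq: "{A. A \<subseteq> insert a S \<and> card A = Suc n} = X \<union> insert a ` Y"
  proof (rule set_eqI, rule iffI)
    fix A assume A: "A \<in> {A. A \<subseteq> insert a S \<and> card A = Suc n}"
    show "A \<in> X \<union> insert a ` Y"
    proof (cases "a \<in> A")
      case True
      have "finite A" using A assms(1) finite_subset by auto
      then have "card (A - {a}) = n" using A True by auto
      moreover have "A - {a} \<subseteq> S" using A by auto
      ultimately have "A - {a} \<in> Y" by (simp add: Y_def)
      moreover have "A = insert a (A - {a})" using True by auto
      ultimately show ?thesis by blast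
    next
      case False
      then show ?thesis using A by (auto simp: X_def)
    qed
  next
    fix A assume "A \<in> X \<union> insert a ` Y"
    then show "A \<in> {A. A \<subseteq> insert a S \<and> card A = Suc n}"
    proof
      assume "A \<in> X" then show ?thesis by (auto simp: X_def)
    next
      assume "A \<in> insert a ` Y"
      then obtain B where B: "B \<subseteq> S" "card B = n" "A = insert a B" by (auto simp: Y_def)
      have "finite B" using B assms(1) finite_subset by auto
      moreover have "a \<notin> B" using B assms(2) by auto
      ultimately show ?thesis using B by auto
    qed
  qed
  have finX: "finite X" unfolding X_def using assms(1) by (auto intro: finite_subset[OF _ fin])
  have finY: "finite Y" unfolding Y_def using assms(1) by (auto intro: finite_subset[OF _ fin])
  have disj: "X \<inter> insert a ` Y = {}" using assms(2) by (auto simp: X_def Y_def)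
  have inj: "inj_on (insert a) Y"
    unfolding inj_on_def Y_def using assms(2) by (metis insert_Diff_if insert_iff mem_Collect_eq subset_iff Diff_insert_absorb)
  have "(\<Sum>A\<in>insert a ` Y. \<Prod>j\<in>A. f j) = (\<Sum>B\<in>Y. \<Prod>j\<in>insert a B. f j)"
    by (rule sum.reindex[OF inj, unfolded comp_def])
  also have "\<dots> = (\<Sum>B\<in>Y. f a * (\<Prod>j\<in>B. f j))"
  proof (rule sum.cong[OF refl])
    fix B assume "B \<in> Y"
    then have "finite B" "a \<notin> B" using assms finite_subset by (auto simp: Y_def)
    then show "(\<Prod>j\<in>insert a B. f j) = f a * (\<Prod>j\<in>B. f j)" by simp
  qed
  also have "\<dots> = f a * (\<Sum>B\<in>Y. \<Prod>j\<in>B. f j)" by (simp add: sum_distrib_left)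
  finally have "(\<Sum>A\<in>insert a ` Y. \<Prod>j\<in>A. f j) = f a * (\<Sum>B\<in>Y. \<Prod>j\<in>B. f j)" .
  then show ?thesis
    unfolding eq by (subst sum.union_disjoint[OF finX finite_imageI[OF finY] disj]) (simp add: X_def Y_def)
qed

lemma esym0: "esym_sq r 0 = 1"
proof -
  have "{A. A \<subseteq> {1..<r} \<and> card A = 0} = {{}}"
    by (auto dest: finite_subset[OF _ finite_atLeastLessThan])
  then show ?thesis by (simp add: esym_sq_def)
qed

lemma esym_big: assumes "r - 1 < n" shows "esym_sq r n = 0"
proof -
  have e: "{A. A \<subseteq> {1..<r} \<and> card A = n} = {}"
  proof (rule ccontr)
    assume "{A. A \<subseteq> {1..<r} \<and> card A = n} \<noteq> {}"
    then obtain A where "A \<subseteq> {1..<r}" "card A = n" by auto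
    then have "n \<le> card {1..<r}" using card_mono by blast
    then show False using assms by simp
  qed
  show ?thesis unfolding esym_sq_def e by simp
qed

lemma esym_Suc: assumes "v \<ge> 1"
  shows "esym_sq (Suc v) (Suc n) = esym_sq v (Suc n) + (real v)^2 * esym_sq v n"
proof -
  have "{1..<Suc v} = insert v {1..<v}" using assms by auto
  then show ?thesis unfolding esym_sq_def
    using esym_insert[where S="{1..<v}" and a=v and n=n and f="\<lambda>j. (real j)^2"] by simp
qed




lemma dinv:
  assumes s: "sin (pi * t) \<noteq> 0"
  shows "((\<lambda>t. 1 / sin (pi * t) ^ k) has_real_derivative
          - (real k * pi * cos (pi * t)) / sin (pi * t) ^ Suc k) (at t)"
proof -
  have d: "((\<lambda>t. sin (pi * t) ^ k) has_real_derivative real k * sin (pi * t) ^ (k - 1) * (cos (pi * t) * pi)) (at t)"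
    by (auto intro!: derivative_eq_intros)
  have "((\<lambda>t. 1 / sin (pi * t) ^ k) has_real_derivative
      - (real k * sin (pi * t) ^ (k - 1) * (cos (pi * t) * pi)) / (sin (pi * t) ^ k)^2) (at t)"
    using DERIV_inverse_fun[OF d] s by (simp add: inverse_eq_divide power2_eq_square)
  moreover have "- (real k * sin (pi * t) ^ (k - 1) * (cos (pi * t) * pi)) / (sin (pi * t) ^ k)^2
      = - (real k * pi * cos (pi * t)) / sin (pi * t) ^ Suc k"
  proof (cases k)
    case 0 then show ?thesis by simp
  next
    case (Suc j)
    then show ?thesis using s by (simp add: field_simps power2_eq_square)
  qed
  ultimately show ?thesis by simp
qed




lemma alg:
  fixes P s c K K2 x :: real
  assumes "P \<noteq> 0" "s \<noteq> 0" "c^2 = 1 - s^2" "K2 = (2 * x+1) * (2 * x) * pi^2 * K"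
  shows "K2 / (P * s^2) = -(2 * x) * pi * K * ((-s * pi) * (1/(P * s)) + (-((2 * x+1) * pi * c)/(P * s^2)) * c) + (2 * pi * x)^2 * (K/P)"
proof -
  have "-(2 * x) * pi * K * ((-s * pi) * (1/(P * s)) + (-((2 * x+1) * pi * c)/(P * s^2)) * c) + (2 * pi * x)^2 * (K/P)
     = (2 * x * pi^2 * K * s^2 + 2 * x * (2 * x+1) * pi^2 * K * c^2 + 4 * pi^2 * x^2 * K * s^2) / (P * s^2)"
    using assms(1,2) by (simp add: field_simps power2_eq_square)
  also have "\<dots> = K2 / (P * s^2)"
  proof -
    have e: "2 * x * pi^2 * K * s^2 + 2 * x * (2 * x+1) * pi^2 * K * c^2 + 4 * pi^2 * x^2 * K * s^2 = (2 * x * pi^2 * K + 4 * pi^2 * x^2 * K) * (s^2+c^2)"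
      by (simp add: algebra_simps power2_eq_square)
    have sc: "s^2 + c^2 = 1" using assms(3) by simp
    have n: "(2 * x+1) * (2 * x) * pi^2 * K = 2 * x * pi^2 * K + 4 * pi^2 * x^2 * K"
      by (simp add: algebra_simps power2_eq_square)
    show ?thesis unfolding e sc assms(4) n by simp
  qed
  finally show ?thesis by simp
qed




definition KK :: "nat \<Rightarrow> real" where "KK v = fact (2 * v-1) * pi^(2 * v)"
definition hh :: "nat \<Rightarrow> real \<Rightarrow> real" where "hh v t = KK v * (1 / sin (pi * t)^(2 * v))"
definition cc :: "nat \<Rightarrow> nat \<Rightarrow> real" where "cc v n = (2 * pi)^(2 * n) * esym_sq v n"
definition RR :: "nat \<Rightarrow> real \<Rightarrow> real" where "RR v t = (\<Sum>n<v. cc v n * Q (2 * v-2 * n-1) t)"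

lemma sU: "t \<in> U \<Longrightarrow> sin (pi * t) \<noteq> 0" by (simp add: U_def mult.commute)

lemma KK_Suc: "v \<ge> 1 \<Longrightarrow> KK (Suc v) = (2 * real v+1) * (2 * real v) * pi^2 * KK v"
proof -
  assume "v \<ge> 1"
  then obtain w where w: "v = Suc w" by (cases v) auto
  have a: "2 * Suc (Suc w) - 1 = Suc (Suc (Suc (2 * w)))" by simp
  have b: "2 * Suc w - 1 = Suc (2 * w)" by simp
  show ?thesis unfolding KK_def w a b
    by (simp add: algebra_simps power2_eq_square)
qed

lemma cc_Suc: "v \<ge> 1 \<Longrightarrow> cc (Suc v) (Suc n) = cc v (Suc n) + (2 * pi * real v)^2 * cc v n"
  unfolding cc_def using esym_Suc[of v n] by (simp add: algebra_simps power2_eq_square)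

lemma cc0: "cc v 0 = 1" by (simp add: cc_def esym0)
lemma ccv: "v \<ge> 1 \<Longrightarrow> cc v v = 0" by (simp add: cc_def esym_big)

lemma RR_Suc: assumes "v \<ge> 1"
  shows "RR (Suc v) t = (\<Sum>n<v. cc v n * Q (Suc (2 * v-2 * n)) t) + (2 * pi * real v)^2 * RR v t"
proof -
  have A: "RR (Suc v) t = Q (Suc (2 * v)) t + (\<Sum>n<v. cc v (Suc n) * Q (2 * v - 2 * n - 1) t) + (2 * pi * real v)^2 * RR v t"
  proof -
    have "RR (Suc v) t = cc (Suc v) 0 * Q (2 * Suc v - 1) t + (\<Sum>n<v. cc (Suc v) (Suc n) * Q (2 * Suc v - 2 * Suc n - 1) t)"
      unfolding RR_def by (subst sum.lessThan_Suc_shift) simp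
    also have "\<dots> = Q (Suc (2 * v)) t + (\<Sum>n<v. cc v (Suc n) * Q (2 * v - 2 * n - 1) t) + (2 * pi * real v)^2 * RR v t"
      by (simp add: cc0 cc_Suc[OF assms] RR_def algebra_simps sum.distrib sum_distrib_left)
    finally show ?thesis .
  qed
  have B: "(\<Sum>n<v. cc v n * Q (Suc (2 * v-2 * n)) t) = Q (Suc (2 * v)) t + (\<Sum>n<v. cc v (Suc n) * Q (2 * v - 2 * n - 1) t)"
  proof -
    have "(\<Sum>n<v. cc v n * Q (Suc (2 * v-2 * n)) t) = (\<Sum>n<Suc v. cc v n * Q (Suc (2 * v-2 * n)) t)"
      using ccv[OF assms] by simp
    also have "\<dots> = Q (Suc (2 * v)) t + (\<Sum>n<v. cc v (Suc n) * Q (Suc (2 * v - 2 * Suc n)) t)"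
      by (subst sum.lessThan_Suc_shift) (simp add: cc0)
    also have "(\<Sum>n<v. cc v (Suc n) * Q (Suc (2 * v - 2 * Suc n)) t) = (\<Sum>n<v. cc v (Suc n) * Q (2 * v - 2 * n - 1) t)"
      by (intro sum.cong refl) (simp add: Suc_diff_Suc)
    finally show ?thesis .
  qed
  show ?thesis using A B by simp
qed

lemma hh_RR: "v \<ge> 1 \<Longrightarrow> t \<in> U \<Longrightarrow> hh v t = RR v t"
proof (induction v arbitrary: t rule: nat_induct_at_least)
  case base
  show ?case using Q1[OF base] by (simp add: hh_def RR_def KK_def cc0 power2_eq_square)
next
  case (Suc v)
  define H1 where "H1 t = -(2 * real v) * pi * KK v * (cos (pi * t) * (1 / sin (pi * t)^(Suc (2 * v))))" for t
  define H2 where "H2 t = -(2 * real v) * pi * KK v * ((-sin (pi * t) * pi) * (1 / sin (pi * t)^(Suc (2 * v)))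
       + (-(real (Suc (2 * v)) * pi * cos (pi * t))/sin (pi * t)^(Suc (Suc (2 * v)))) * cos (pi * t))" for t
  define R1 where "R1 t = (\<Sum>n<v. cc v n * Q (2 * v-2 * n) t)" for t
  define R2 where "R2 t = (\<Sum>n<v. cc v n * Q (Suc (2 * v-2 * n)) t)" for t
  have dh: "(hh v has_real_derivative H1 y) (at y)" if "y \<in> U" for y
  proof -
    have "((\<lambda>t. KK v * (1 / sin (pi * t)^(2 * v))) has_real_derivative
           KK v * (- (real (2 * v) * pi * cos (pi * y)) / sin (pi * y) ^ Suc (2 * v))) (at y)"
      by (intro DERIV_cmult dinv sU that)
    then show ?thesis unfolding hh_def[abs_def] H1_def
      by (rule DERIV_cong) (simp add: field_simps)
  qed
  have dR: "(RR v has_real_derivative R1 y) (at y)" if "y \<in> U" for y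
  proof -
    have "((\<lambda>t. \<Sum>n<v. cc v n * Q (2 * v-2 * n-1) t) has_real_derivative
            (\<Sum>n<v. cc v n * Q (Suc (2 * v-2 * n-1)) y)) (at y)"
      by (intro DERIV_sum DERIV_cmult Q_deriv that)
    moreover have "(\<Sum>n<v. cc v n * Q (Suc (2 * v-2 * n-1)) y) = R1 y"
      unfolding R1_def by (intro sum.cong refl) (simp add: Suc_diff_Suc)
    ultimately show ?thesis unfolding RR_def[abs_def] by simp
  qed
  have e1: "H1 y = R1 y" if "y \<in> U" for y
    by (rule deriv_eq_on_open[OF open_U that _ dh[OF that] dR[OF that]]) (use Suc in auto)
  have dH1: "(H1 has_real_derivative H2 y) (at y)" if "y \<in> U" for y
  proof -
    have dc: "((\<lambda>t. cos (pi * t)) has_real_derivative (-sin (pi * y) * pi)) (at y)"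
      by (auto intro!: derivative_eq_intros)
    show ?thesis unfolding H1_def[abs_def] H2_def
      by (intro DERIV_cmult DERIV_cong[OF DERIV_mult[OF dc dinv[OF sU[OF that]]]]) simp
  qed
  have dR1: "(R1 has_real_derivative R2 y) (at y)" if "y \<in> U" for y
    unfolding R1_def[abs_def] R2_def
    by (intro DERIV_sum DERIV_cmult Q_deriv that)
  have e2: "H2 t = R2 t"
    by (rule deriv_eq_on_open[OF open_U Suc.prems _ dH1[OF Suc.prems] dR1[OF Suc.prems]]) (use e1 in auto)
  have s: "sin (pi * t) \<noteq> 0" using sU[OF Suc.prems] .
  have "hh (Suc v) t = H2 t + (2 * pi * real v)^2 * hh v t"
  proof -
    have p1: "sin (pi * t)^(Suc (2 * v)) = sin (pi * t)^(2 * v) * sin (pi * t)" by simp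
    have p2: "sin (pi * t)^(Suc (Suc (2 * v))) = sin (pi * t)^(2 * v) * sin (pi * t)^2" by (simp add: power2_eq_square)
    have p3: "sin (pi * t)^(2 * Suc v) = sin (pi * t)^(2 * v) * sin (pi * t)^2" by (simp add: power2_eq_square)
    have "KK (Suc v) / (sin (pi * t)^(2 * v) * sin (pi * t)^2) =
      -(2 * real v) * pi * KK v * ((-sin (pi * t) * pi) * (1/(sin (pi * t)^(2 * v) * sin (pi * t))) +
        (-((2 * real v+1) * pi * cos (pi * t))/(sin (pi * t)^(2 * v) * sin (pi * t)^2)) * cos (pi * t)) + (2 * pi * real v)^2 * (KK v/sin (pi * t)^(2 * v))"
      by (rule alg) (use s KK_Suc[OF Suc.hyps] in \<open>auto simp: cos_squared_eq\<close>)
    then show ?thesis unfolding hh_def H2_def p1 p2 p3 by (simp add: algebra_simps)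
  qed
  also have "\<dots> = R2 t + (2 * pi * real v)^2 * RR v t" using e2 Suc.IH[OF Suc.prems] by simp
  also have "\<dots> = RR (Suc v) t" unfolding R2_def using RR_Suc[OF Suc.hyps] by simp
  finally show ?case .
qed




lemma sum_lessThan_add_split:
  fixes f :: "nat \<Rightarrow> real"
  shows "(\<Sum>l<a+b. f l) = (\<Sum>l<a. f l) + (\<Sum>k<b. f (a+k))"
  by (induction b) (simp_all add: algebra_simps)

lemma sum_blocks:
  fixes F :: "nat \<Rightarrow> real"
  shows "(\<Sum>l<N * m. F l) = (\<Sum>k<m. \<Sum>j<N. F (j * m+k))"
proof (induction N)
  case 0 then show ?case by simp
next
  case (Suc N)
  have "(\<Sum>l<Suc N * m. F l) = (\<Sum>l<N * m + m. F l)" by (simp add: add.commute)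
  also have "\<dots> = (\<Sum>l<N * m. F l) + (\<Sum>k<m. F (N * m+k))" by (rule sum_lessThan_add_split)
  also have "\<dots> = (\<Sum>k<m. \<Sum>j<Suc N. F (j * m+k))" using Suc by (simp add: sum.distrib)
  finally show ?case .
qed

lemma zeta_eq:
  assumes "p \<ge> 2"
  shows "(\<lambda>l. inverse (real l ^ p)) sums zeta_real (real p)"
proof -
  have sm: "summable (\<lambda>l. inverse (real l ^ p))" using inverse_power_summable[OF assms] by simp
  have "zeta_real (real p) = (\<Sum>k. inverse (real (Suc k) ^ p))"
    unfolding zeta_real_def
    by (intro suminf_cong) (simp add: powr_realpow inverse_eq_divide del: of_nat_Suc)
  also have "\<dots> = (\<Sum>l. inverse (real l ^ p))"
    using suminf_split_head[OF sm] assms by simp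
  finally show ?thesis using sm by (simp add: summable_sums)
qed

lemma PGsum:
  assumes m: "m \<ge> 1" and s: "s \<ge> 1"
  shows "(\<Sum>k\<in>{1..<m}. Polygamma (2 * s-1) (real k / real m)) =
           fact (2 * s-1) * (real m ^ (2 * s) - 1) * zeta_real (real (2 * s))"
proof -
  define p where "p = 2 * s"
  have p2: "p \<ge> 2" using s by (simp add: p_def)
  define F where "F l = inverse (real l ^ p)" for l
  define z where "z = zeta_real (real p)"
  define A where "A k = (if k = 0 then inverse (real m ^ p) * z
       else inverse (real m ^ p) * (Polygamma (p-1) (real k / real m) / fact (p-1)))" for k
  have mpos: "real m > 0" using m by simp
  have Fs: "F sums z" unfolding F_def z_def by (rule zeta_eq[OF p2])
  have lim1: "(\<lambda>N. \<Sum>l<N * m. F l) \<longlonglongrightarrow> z"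
  proof -
    have sm: "strict_mono (\<lambda>N::nat. N * m)" using m by (auto simp: strict_mono_def)
    from LIMSEQ_subseq_LIMSEQ[OF Fs[unfolded sums_def] sm] show ?thesis by (simp add: comp_def)
  qed
  have inner: "(\<lambda>j. F (j * m+k)) sums A k" if "k < m" for k
  proof (cases "k = 0")
    case True
    have "(\<lambda>j. inverse (real m ^ p) * F j) sums (inverse (real m ^ p) * z)"
      by (rule sums_mult[OF Fs])
    moreover have "(\<lambda>j. inverse (real m ^ p) * F j) = (\<lambda>j. F (j * m+k))"
      using True by (auto simp: F_def power_mult_distrib mult.commute)
    ultimately show ?thesis using True by (simp add: A_def)
  next
    case False
    have knz: "real k / real m \<noteq> 0" using False mpos by simp
    have "(\<lambda>j. inverse ((real k / real m + of_nat j)^Suc (p-1))) sums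
            ((-1) ^ Suc (p-1) * Polygamma (p-1) (real k / real m) / fact (p-1))"
      by (rule Polygamma_LIMSEQ[OF knz]) (use p2 in simp)
    moreover have "Suc (p-1) = p" using p2 by simp
    moreover have "(-1::real) ^ p = 1" by (simp add: p_def)
    ultimately have h: "(\<lambda>j. inverse ((real k / real m + of_nat j)^p)) sums
            (Polygamma (p-1) (real k / real m) / fact (p-1))" by simp
    have "(\<lambda>j. inverse (real m ^ p) * inverse ((real k / real m + of_nat j)^p)) sums A k"
      using sums_mult[OF h, of "inverse (real m ^ p)"] False by (simp add: A_def)
    moreover have "(\<lambda>j. inverse (real m ^ p) * inverse ((real k / real m + of_nat j)^p)) = (\<lambda>j. F (j * m+k))"
    proof
      fix j
      have "real m * (real k / real m + real j) = real (j * m+k)" using mpos by (simp add: field_simps)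
      have "inverse (real m ^ p) * inverse ((real k / real m + of_nat j)^p) = inverse ((real m * (real k / real m + real j))^p)"
        by (simp only: power_mult_distrib inverse_mult_distrib of_nat_id)
      also have "\<dots> = F (j * m+k)" unfolding F_def
        using \<open>real m * (real k / real m + real j) = real (j * m+k)\<close> by simp
      finally show "inverse (real m ^ p) * inverse ((real k / real m + of_nat j)^p) = F (j * m+k)" .
    qed
    ultimately show ?thesis by simp
  qed
  have lim2: "(\<lambda>N. \<Sum>l<N * m. F l) \<longlonglongrightarrow> (\<Sum>k<m. A k)"
    unfolding sum_blocks
    by (intro tendsto_sum) (use inner in \<open>auto simp: sums_def\<close>)
  have zA: "z = (\<Sum>k<m. A k)" using LIMSEQ_unique[OF lim1 lim2] .
  have "{..<m} = insert 0 {1..<m}" using m by auto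
  then have "(\<Sum>k<m. A k) = A 0 + (\<Sum>k\<in>{1..<m}. A k)" by simp
  also have "(\<Sum>k\<in>{1..<m}. A k) = inverse (real m ^ p) / fact (p-1) *
        (\<Sum>k\<in>{1..<m}. Polygamma (p-1) (real k / real m))"
    by (simp add: A_def sum_distrib_left)
  finally have "z = inverse (real m ^ p) * z + inverse (real m ^ p) / fact (p-1) *
        (\<Sum>k\<in>{1..<m}. Polygamma (p-1) (real k / real m))" using zA by (simp add: A_def)
  then have "(\<Sum>k\<in>{1..<m}. Polygamma (p-1) (real k / real m)) = fact (p-1) * (real m ^ p - 1) * z"
    using mpos by (simp add: field_simps)
  then show ?thesis by (simp add: p_def z_def)
qed




lemma Qsum:
  assumes m: "m \<ge> 1" and s: "s \<ge> 1"
  shows "(\<Sum>k\<in>{1..m-1}. Q (2 * s-1) (real k / real m)) =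
           2 * fact (2 * s-1) * (real m ^ (2 * s) - 1) * zeta_real (real (2 * s))"
proof -
  have iv: "{1..m-1} = {1..<m}" using m by auto
  have sg: "(-1::real) ^ Suc (2 * s-1) = 1" using s by (simp add: Suc_diff_Suc)
  have refl: "(\<Sum>k\<in>{1..<m}. Polygamma (2 * s-1) (1 - real k / real m)) =
              (\<Sum>k\<in>{1..<m}. Polygamma (2 * s-1) (real k / real m))"
  proof (rule sum.reindex_bij_witness[where i="\<lambda>k. m-k" and j="\<lambda>k. m-k"])
    fix k assume k: "k \<in> {1..<m}"
    show "m - (m - k) = k" using k by auto
    show "m - k \<in> {1..<m}" using k by auto
    have "real (m - k) / real m = 1 - real k / real m" using k m by (simp add: of_nat_diff field_simps)
    then show "Polygamma (2 * s-1) (real (m - k) / real m) = Polygamma (2 * s-1) (1 - real k / real m)" by simp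
  qed auto
  have "(\<Sum>k\<in>{1..m-1}. Q (2 * s-1) (real k / real m)) =
        (\<Sum>k\<in>{1..<m}. Polygamma (2 * s-1) (real k / real m)) + (\<Sum>k\<in>{1..<m}. Polygamma (2 * s-1) (1 - real k / real m))"
    unfolding iv Q_def sg by (simp add: sum.distrib)
  also have "\<dots> = 2 * (\<Sum>k\<in>{1..<m}. Polygamma (2 * s-1) (real k / real m))" using refl by simp
  finally show ?thesis using PGsum[OF m s] by simp
qed

lemma KK_pos: "KK r > 0" by (simp add: KK_def)

lemma frac_U: assumes "0 < t" "t < 1" shows "t \<in> U"
proof -
  have "t \<notin> \<int>"
  proof
    assume "t \<in> \<int>"
    then obtain i where "t = of_int i" by (auto elim: Ints_cases)
    then show False using assms by auto
  qed
  then show ?thesis by (simp add: U_iff)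
qed

lemma part1:
  assumes r: "r \<ge> 1" and m: "m \<ge> 1"
  shows "dowker_sum m r =
             2 ^ (2 * r+1) * (\<Sum>n\<in>{0..r-1}.
                (real m / (2 * pi)) ^ (2 * r-2 * n) * (Gamma (real (2 * r-2 * n)) / Gamma (real (2 * r)))
                * esym_sq r n * (1 - 1 / real m ^ (2 * r-2 * n)) * zeta_real (real (2 * r-2 * n)))"
proof -
  have mpos: "real m > 0" using m by simp
  have tm: "inverse (sin (of_nat k * pi / of_nat m)) ^ (2 * r) = RR r (real k / real m) / KK r"
    if k: "k \<in> {1..m-1}" for k
  proof -
    have t: "real k / real m \<in> U" using k m by (intro frac_U) (auto simp: field_simps)
    have "RR r (real k / real m) = hh r (real k / real m)" using hh_RR[OF r t] by simp
    also have "\<dots> = KK r * (1 / sin (pi * (real k / real m)) ^ (2 * r))" by (simp add: hh_def)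
    also have "pi * (real k / real m) = of_nat k * pi / of_nat m" by simp
    finally show ?thesis using KK_pos[of r] by (simp add: field_simps power_inverse inverse_eq_divide)
  qed
  have "dowker_sum m r = (\<Sum>k\<in>{1..m-1}. RR r (real k / real m) / KK r)"
    unfolding dowker_sum_def using tm by (rule sum.cong[OF refl])
  also have "\<dots> = (\<Sum>n<r. cc r n * (\<Sum>k\<in>{1..m-1}. Q (2 * r-2 * n-1) (real k / real m))) / KK r"
  proof -
    have "(\<Sum>k\<in>{1..m-1}. RR r (real k / real m)) = (\<Sum>n<r. cc r n * (\<Sum>k\<in>{1..m-1}. Q (2 * r-2 * n-1) (real k / real m)))"
      unfolding RR_def sum_distrib_left by (rule sum.swap)
    then show ?thesis by (simp add: sum_divide_distrib[symmetric])
  qed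
  also have "\<dots> = (\<Sum>n<r. cc r n * (2 * fact (2 * (r-n)-1) * (real m ^ (2 * (r-n)) - 1) * zeta_real (real (2 * (r-n))))) / KK r"
  proof -
    have eqs: "cc r n * (\<Sum>k\<in>{1..m-1}. Q (2 * r-2 * n-1) (real k / real m)) = cc r n * (2 * fact (2 * (r-n)-1) * (real m ^ (2 * (r-n)) - 1) * zeta_real (real (2 * (r-n))))"
      if "n \<in> {..<r}" for n
    proof -
      have "2 * r-2 * n-1 = 2 * (r-n)-1" by simp
      moreover have "r - n \<ge> 1" using that by simp
      ultimately show ?thesis using Qsum[OF m, of "r-n"] that by (simp add: of_nat_diff)
    qed
    have "(\<Sum>n<r. cc r n * (\<Sum>k\<in>{1..m-1}. Q (2 * r-2 * n-1) (real k / real m))) = (\<Sum>n<r. cc r n * (2 * fact (2 * (r-n)-1) * (real m ^ (2 * (r-n)) - 1) * zeta_real (real (2 * (r-n)))))"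
      by (rule sum.cong[OF refl eqs])
    then show ?thesis by simp
  qed
  also have "\<dots> = 2 ^ (2 * r+1) * (\<Sum>n\<in>{0..r-1}.
                (real m / (2 * pi)) ^ (2 * r-2 * n) * (Gamma (real (2 * r-2 * n)) / Gamma (real (2 * r)))
                * esym_sq r n * (1 - 1 / real m ^ (2 * r-2 * n)) * zeta_real (real (2 * r-2 * n)))"
  proof -
    have iv: "{0..r-1} = {..<r}" using r by auto
    have eq: "cc r n * (2 * fact (2 * (r-n)-1) * (real m ^ (2 * (r-n)) - 1) * zeta_real (real (2 * (r-n)))) / KK r
      = 2 ^ (2 * r+1) * ((real m / (2 * pi)) ^ (2 * r-2 * n) * (Gamma (real (2 * r-2 * n)) / Gamma (real (2 * r)))
                * esym_sq r n * (1 - 1 / real m ^ (2 * r-2 * n)) * zeta_real (real (2 * r-2 * n)))"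
      if n: "n < r" for n
    proof -
      define s where "s = r - n"
      have s: "r = n + s" "s \<ge> 1" using n by (auto simp: s_def)
      obtain w where w: "s = Suc w" using s by (cases s) auto
      have e1: "2 * r-2 * n = 2 * s" "2 * (r-n) = 2 * s" using s by auto
      have g1: "Gamma (real (2 * s)) = fact (2 * s-1)"
      proof -
        have "real (2 * s) = 1 + real (2 * s-1)" using s by simp
        then have "Gamma (real (2 * s)) = Gamma (1 + real (2 * s-1))" by (rule arg_cong)
        also have "\<dots> = fact (2 * s-1)" by (rule Gamma_fact)
        finally show ?thesis .
      qed
      have g2: "Gamma (real (2 * r)) = fact (2 * r-1)"
      proof -
        have "real (2 * r) = 1 + real (2 * r-1)" using r by simp
        then have "Gamma (real (2 * r)) = Gamma (1 + real (2 * r-1))" by (rule arg_cong)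
        also have "\<dots> = fact (2 * r-1)" by (rule Gamma_fact)
        finally show ?thesis .
      qed
      have fpos: "(fact (2 * r-1)::real) > 0" by simp
      have gen: "(A * P) * es * (2 * f2 * (M - 1) * z) / (f1 * (P * QQ)) =
           (2 * A * T) * ((M / (T * QQ)) * (f2 / f1) * es * (1 - 1 / M) * z)"
        if "A > 0" "P > 0" "QQ > 0" "T > 0" "M > 0" "f1 > 0" for A P QQ T M f1 f2 es z :: real
        using that by (simp add: field_simps)
      have p1: "(2 * pi) ^ (2 * n) = 2 ^ (2 * n) * pi ^ (2 * n)" by (rule power_mult_distrib)
      have p2: "pi ^ (2 * r) = pi ^ (2 * n) * pi ^ (2 * s)" by (simp add: s(1) power_add distrib_left)
      have p3: "(2::real) ^ (2 * r + 1) = 2 * 2 ^ (2 * n) * 2 ^ (2 * s)" by (simp add: s(1) power_add distrib_left)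
      have p4: "(real m / (2 * pi)) ^ (2 * s) = real m ^ (2 * s) / (2 ^ (2 * s) * pi ^ (2 * s))"
        by (simp add: power_divide power_mult_distrib)
      show ?thesis unfolding e1 g1 g2 cc_def KK_def p1 p2 p3 p4
        by (rule gen) (use mpos fpos in auto)
    qed
    show ?thesis unfolding iv sum_divide_distrib sum_distrib_left by (intro sum.cong refl eq) auto
  qed
  finally show ?thesis .
qed




lemma zeta_pos: assumes "p \<ge> 2" shows "zeta_real (real p) > 0"
proof -
  have sm: "(\<lambda>l. inverse (real l ^ p)) sums zeta_real (real p)" by (rule zeta_eq[OF assms])
  have "(\<Sum>l<2. inverse (real l ^ p)) \<le> (\<Sum>l. inverse (real l ^ p))"
    by (rule sum_le_suminf) (use sm in \<open>auto simp: sums_summable\<close>)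
  moreover have "(\<Sum>l<2. inverse (real l ^ p)) = 1" using assms by (simp add: numeral_2_eq_2)
  ultimately show ?thesis using sm by (simp add: sums_iff)
qed

theorem mainTheorem9:
  fixes r :: nat
  assumes "r \<ge> 1"
  shows "(\<forall>m::nat. m \<ge> 1 \<longrightarrow>
           dowker_sum m r =
             2 ^ (2 * r+1) * (\<Sum>n\<in>{0..r-1}.
                (real m / (2 * pi)) ^ (2 * r-2 * n) * (Gamma (real (2 * r-2 * n)) / Gamma (real (2 * r)))
                * esym_sq r n * (1 - 1 / real m ^ (2 * r-2 * n)) * zeta_real (real (2 * r-2 * n))))
       \<and> (\<exists>p :: real poly. degree p = r \<and> [:-1, 1:] dvd p \<and>
            (\<forall>m::nat. m \<ge> 1 \<longrightarrow> dowker_sum m r = poly p ((real m)^2)))"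
proof (intro conjI allI impI)
  fix m :: nat assume "m \<ge> 1"
  then show "dowker_sum m r =
             2 ^ (2 * r+1) * (\<Sum>n\<in>{0..r-1}.
                (real m / (2 * pi)) ^ (2 * r-2 * n) * (Gamma (real (2 * r-2 * n)) / Gamma (real (2 * r)))
                * esym_sq r n * (1 - 1 / real m ^ (2 * r-2 * n)) * zeta_real (real (2 * r-2 * n)))"
    using part1[OF assms] by blast
next
  define B where "B n = 2 ^ (2 * r+1) * (1 / (2 * pi)) ^ (2 * r-2 * n) * (Gamma (real (2 * r-2 * n)) / Gamma (real (2 * r)))
                * esym_sq r n * zeta_real (real (2 * r-2 * n))" for n
  define p :: "real poly" where "p = (\<Sum>n\<in>{0..r-1}. smult (B n) (monom 1 (r-n) - 1))"
  have B0: "B 0 \<noteq> 0"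
  proof -
    have "Gamma (real (2 * r)) > 0" using assms by simp
    moreover have "zeta_real (real (2 * r)) > 0" using assms by (intro zeta_pos) simp
    ultimately show ?thesis by (simp add: B_def esym0)
  qed
  have cr: "coeff p r = B 0"
  proof -
    have "coeff p r = (\<Sum>n\<in>{0..r-1}. (if n = 0 then B n else 0))"
      unfolding p_def coeff_sum using assms by (intro sum.cong refl) auto
    also have "\<dots> = B 0" using assms by simp
    finally show ?thesis .
  qed
  have cbig: "\<forall>i>r. coeff p i = 0" unfolding p_def coeff_sum by (auto intro!: sum.neutral)
  have "degree p = r"
    using le_degree[of p r] degree_le[OF cbig] cr B0 by simp
  moreover have "[:-1, 1:] dvd p"
    unfolding p_def
  proof (intro dvd_sum dvd_smult)
    fix n
    have h: "poly (monom 1 (r - n) - 1 :: real poly) 1 = 0" by (simp add: poly_monom)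
    show "[:-1, 1:] dvd (monom 1 (r - n) - 1 :: real poly)" using poly_eq_0_iff_dvd[of "monom 1 (r - n) - 1 :: real poly" 1] h by blast
  qed
  moreover have "\<forall>m::nat. m \<ge> 1 \<longrightarrow> dowker_sum m r = poly p ((real m)^2)"
  proof (intro allI impI)
    fix m :: nat assume m: "m \<ge> 1"
    have mpos: "real m > 0" using m by simp
    have "dowker_sum m r = 2 ^ (2 * r+1) * (\<Sum>n\<in>{0..r-1}.
                (real m / (2 * pi)) ^ (2 * r-2 * n) * (Gamma (real (2 * r-2 * n)) / Gamma (real (2 * r)))
                * esym_sq r n * (1 - 1 / real m ^ (2 * r-2 * n)) * zeta_real (real (2 * r-2 * n)))"
      using part1[OF assms m] .
    also have "\<dots> = (\<Sum>n\<in>{0..r-1}. B n * ((real m ^ 2) ^ (r - n) - 1))"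
      unfolding sum_distrib_left
    proof (intro sum.cong refl)
      fix n assume "n \<in> {0..r-1}"
      have e: "(real m ^ 2) ^ (r - n) = real m ^ (2 * r-2 * n)" by (simp add: power_mult[symmetric] diff_mult_distrib2)
      show "2 ^ (2 * r+1) * ((real m / (2 * pi)) ^ (2 * r-2 * n) * (Gamma (real (2 * r-2 * n)) / Gamma (real (2 * r)))
                * esym_sq r n * (1 - 1 / real m ^ (2 * r-2 * n)) * zeta_real (real (2 * r-2 * n))) =
            B n * ((real m ^ 2) ^ (r - n) - 1)"
      proof -
        define a where "a = 2 * r-2 * n"
        have e2: "(real m / (2 * pi))^a * (1 - 1/real m^a) = (1/(2 * pi))^a * (real m^a - 1)"
          using mpos by (simp add: power_divide field_simps)
        have "2 ^ (2 * r+1) * ((real m / (2 * pi)) ^ a * (Gamma (real a) / Gamma (real (2 * r)))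
                * esym_sq r n * (1 - 1 / real m ^ a) * zeta_real (real a)) =
              2 ^ (2 * r+1) * (((real m / (2 * pi))^a * (1 - 1/real m^a)) * (Gamma (real a) / Gamma (real (2 * r)))
                * esym_sq r n * zeta_real (real a))" by (simp only: ac_simps)
        also have "\<dots> = 2 ^ (2 * r+1) * (((1/(2 * pi))^a * (real m^a - 1)) * (Gamma (real a) / Gamma (real (2 * r)))
                * esym_sq r n * zeta_real (real a))" by (simp only: e2)
        also have "\<dots> = B n * (real m ^ a - 1)" unfolding B_def a_def[symmetric] by (simp only: ac_simps)
        finally show ?thesis unfolding e a_def .
      qed
    qed
    also have "\<dots> = poly p ((real m)^2)"
      unfolding p_def poly_sum by (simp add: poly_monom)
    finally show "dowker_sum m r = poly p ((real m)^2)" .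
  qed
  ultimately show "\<exists>p :: real poly. degree p = r \<and> [:-1, 1:] dvd p \<and>
            (\<forall>m::nat. m \<ge> 1 \<longrightarrow> dowker_sum m r = poly p ((real m)^2))" by blast
qed


end
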